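(* Let $A$ be a non-empty set, $\xi:B_{\ell_\infty(A)}\to\mathbb R$ a weak$^*$-continuous function (weak$^*$ topology from $\ell_\infty(A)=\ell_1(A)^*$), and $\phi\in\ell_\infty(A)^*$ with decomposition $\phi=\phi_0+\phi_1$, where $\phi_0\in\ell_1(A)$ (acting by $\phi_0(x^* )=\sum_a\phi_0(a)x^*(a)$) and $\phi_1\in\ell_\infty(A)^*$ vanishes on all finitely supported elements of $\ell_\infty(A)$. If $\xi(x^* )\le g_\phi(x^* )$ for all $x^*\in B_{\ell_\infty(A)}$, then $\xi(x^* )\le g_{\phi_0}(x^* )$ for all $x^*\in B_{\ell_\infty(A)}$.
   Context: For a linear functional $\psi$ on $\ell_\infty(A)$, $g_\psi:\ell_\infty(A)\to\mathbb R_+$ is defined by $g_\psi(x^* )=|\psi(|x^*|)|$. Every $\phi\in\ell_\infty(A)^*$ decomposes uniquely as $\phi=\phi_0+\phi_1$ as described. *)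

theory Defs
  imports "HOL-Analysis.Analysis"
begin

text \<open>ell_infinity(A), with A modelled by the (non-empty) type 'a.\<close>
definition linf :: "('a \<Rightarrow> real) set" where
  "linf = {x. bounded (range x)}"

definition linf_norm :: "('a \<Rightarrow> real) \<Rightarrow> real" where
  "linf_norm x = (SUP a. \<bar>x a\<bar>)"

definition linf_ball :: "('a \<Rightarrow> real) set" where
  "linf_ball = {x. \<forall>a. \<bar>x a\<bar> \<le> 1}"

definition l1 :: "('a \<Rightarrow> real) set" where
  "l1 = {f. (\<lambda>a. \<bar>f a\<bar>) summable_on UNIV}"

definition l1_pair :: "('a \<Rightarrow> real) \<Rightarrow> ('a \<Rightarrow> real) \<Rightarrow> real" where
  "l1_pair f x = (\<Sum>\<^sub>\<infinity>a. f a * x a)"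

text \<open>Elements of the dual ell_infinity(A)^*: bounded linear functionals on ell_infinity
  (values outside ell_infinity are irrelevant).\<close>
definition linf_dual :: "(('a \<Rightarrow> real) \<Rightarrow> real) set" where
  "linf_dual = {\<psi>. (\<forall>x\<in>linf. \<forall>y\<in>linf. \<psi> (\<lambda>a. x a + y a) = \<psi> x + \<psi> y)
      \<and> (\<forall>c. \<forall>x\<in>linf. \<psi> (\<lambda>a. c * x a) = c * \<psi> x)
      \<and> (\<exists>C. \<forall>x\<in>linf. \<bar>\<psi> x\<bar> \<le> C * linf_norm x)}"

definition weak_star :: "('a \<Rightarrow> real) topology" where
  "weak_star = topology_generated_by
     {{x. l1_pair f x \<in> U} | f U. f \<in> l1 \<and> open U}"

definition g_fun :: "(('a \<Rightarrow> real) \<Rightarrow> real) \<Rightarrow> ('a \<Rightarrow> real) \<Rightarrow> real" where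
  "g_fun \<psi> x = \<bar>\<psi> (\<lambda>a. \<bar>x a\<bar>)\<bar>"

definition fin_supp :: "('a \<Rightarrow> real) \<Rightarrow> bool" where
  "fin_supp x \<longleftrightarrow> finite {a. x a \<noteq> 0}"

end

theory Submission
  imports Defs
begin

lemma limitin_gen:
  assumes "l \<in> \<Union>S" and "\<forall>s\<in>S. l \<in> s \<longrightarrow> eventually (\<lambda>i. g i \<in> s) F"
  shows "limitin (topology_generated_by S) g l F"
  unfolding limitin_def
proof (intro conjI allI impI)
  show "l \<in> topspace (topology_generated_by S)" using assms(1) by simp
  fix U assume "openin (topology_generated_by S) U \<and> l \<in> U"
  then have "generate_topology_on S U" "l \<in> U"
    by (auto simp: openin_topology_generated_by_iff)
  then show "eventually (\<lambda>i. g i \<in> U) F"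
  proof (induction U rule: generate_topology_on.induct)
    case Empty then show ?case by simp
  next
    case (Int a b) then show ?case by (auto intro: eventually_conj)
  next
    case (UN K)
    then obtain k where "k \<in> K" "l \<in> k" by auto
    with UN have "eventually (\<lambda>i. g i \<in> k) F" by blast
    then show ?case by (rule eventually_mono) (use \<open>k \<in> K\<close> in auto)
  next
    case (Basis s) then show ?case using assms(2) by blast
  qed
qed

lemma summ:
  assumes "f \<in> l1" "\<forall>a. \<bar>x a\<bar> \<le> 1"
  shows "(\<lambda>a. f a * x a) summable_on UNIV"
proof -
  have "(\<lambda>a. \<bar>f a\<bar>) summable_on UNIV" using assms(1) unfolding l1_def by simp
  then have "(\<lambda>a. norm (f a * x a)) summable_on UNIV"
  proof (rule summable_on_comparison_test)
    fix a
    have "\<bar>f a\<bar> * \<bar>x a\<bar> \<le> \<bar>f a\<bar> * 1" using assms(2) by (intro mult_left_mono) auto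
    then show "norm (f a * x a) \<le> \<bar>f a\<bar>" by (simp add: abs_mult)
  qed simp
  then show ?thesis using summable_on_iff_abs_summable_on_real by blast
qed

lemma trunc_pair:
  assumes "finite F"
  shows "l1_pair f (\<lambda>a. if a \<in> F then x a else 0) = (\<Sum>a\<in>F. f a * x a)"
proof -
  have "l1_pair f (\<lambda>a. if a \<in> F then x a else 0) = infsum (\<lambda>a. f a * x a) F"
    unfolding l1_pair_def by (rule infsum_cong_neutral) auto
  then show ?thesis using assms by simp
qed

lemma tend:
  assumes "f \<in> l1" "\<forall>a. \<bar>x a\<bar> \<le> 1"
  shows "((\<lambda>F. l1_pair f (\<lambda>a. if a \<in> F then x a else 0)) \<longlongrightarrow> l1_pair f x)
           (finite_subsets_at_top UNIV)"
proof -
  have "((\<lambda>a. f a * x a) has_sum l1_pair f x) UNIV"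
    unfolding l1_pair_def using summ[OF assms] by (rule has_sum_infsum)
  then have "(sum (\<lambda>a. f a * x a) \<longlongrightarrow> l1_pair f x) (finite_subsets_at_top UNIV)"
    by (simp add: has_sum_def)
  then show ?thesis
    by (rule Lim_transform_eventually)
       (auto simp: trunc_pair eventually_finite_subsets_at_top_weakI)
qed

theorem lemma4p9:
  fixes \<xi> :: "('a \<Rightarrow> real) \<Rightarrow> real"
    and \<phi> \<phi>1 :: "('a \<Rightarrow> real) \<Rightarrow> real"
    and \<phi>0 :: "'a \<Rightarrow> real"
  assumes cont: "continuous_map (subtopology weak_star linf_ball) euclideanreal \<xi>"
    and phi: "\<phi> \<in> linf_dual"
    and phi0: "\<phi>0 \<in> l1"
    and phi1: "\<phi>1 \<in> linf_dual"
    and phi1_van: "\<forall>x\<in>linf. fin_supp x \<longrightarrow> \<phi>1 x = 0"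
    and decomp: "\<forall>x\<in>linf. \<phi> x = l1_pair \<phi>0 x + \<phi>1 x"
    and le: "\<forall>x\<in>linf_ball. \<xi> x \<le> g_fun \<phi> x"
  shows "\<forall>x\<in>linf_ball. \<xi> x \<le> g_fun (l1_pair \<phi>0) x"
proof
  fix x :: "'a \<Rightarrow> real" assume x: "x \<in> linf_ball"
  then have xb: "\<forall>a. \<bar>x a\<bar> \<le> 1" by (simp add: linf_ball_def)
  define xF where "xF F = (\<lambda>a. if a \<in> F then x a else (0::real))" for F :: "'a set"
  have xFb: "xF F \<in> linf_ball" for F using xb by (simp add: xF_def linf_ball_def)
  have lim: "limitin weak_star xF x (finite_subsets_at_top UNIV)"
    unfolding weak_star_def
  proof (rule limitin_gen)
    have "(\<lambda>_. 0) \<in> l1" by (simp add: l1_def)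
    then have "{x. l1_pair (\<lambda>_. 0) x \<in> (UNIV::real set)} \<in> {{x. l1_pair f x \<in> U} | f U. f \<in> l1 \<and> open U}"
      by (intro CollectI exI[of _ "\<lambda>_. 0"] exI[of _ "UNIV::real set"]) simp
    then show "x \<in> \<Union> {{x. l1_pair f x \<in> U} | f U. f \<in> l1 \<and> open U}"
      by (rule UnionI) simp
    show "\<forall>s\<in>{{x. l1_pair f x \<in> U} | f U. f \<in> l1 \<and> open U}.
           x \<in> s \<longrightarrow> eventually (\<lambda>i. xF i \<in> s) (finite_subsets_at_top UNIV)"
    proof (intro ballI impI)
      fix s assume "s \<in> {{x. l1_pair f x \<in> U} | f U. f \<in> l1 \<and> open U}" and xs: "x \<in> s"
      then obtain f U where s: "s = {x. l1_pair f x \<in> U}" and f: "f \<in> l1" and U: "open U"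
        by blast
      have xU: "l1_pair f x \<in> U" using xs s by simp
      have "((\<lambda>F. l1_pair f (xF F)) \<longlongrightarrow> l1_pair f x) (finite_subsets_at_top UNIV)"
        using tend[OF f xb] by (simp add: xF_def)
      then have "eventually (\<lambda>F. l1_pair f (xF F) \<in> U) (finite_subsets_at_top UNIV)"
        using U xU by (auto simp: tendsto_def)
      then show "eventually (\<lambda>i. xF i \<in> s) (finite_subsets_at_top UNIV)"
        by (simp add: s)
    qed
  qed
  then have "limitin (subtopology weak_star linf_ball) xF x (finite_subsets_at_top UNIV)"
    using x xFb by (simp add: limitin_subtopology)
  from continuous_map_limit[OF cont this]
  have L1: "((\<lambda>F. \<xi> (xF F)) \<longlongrightarrow> \<xi> x) (finite_subsets_at_top UNIV)"
    by (simp add: o_def)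
  have ab: "\<forall>a. \<bar>\<bar>x a\<bar>\<bar> \<le> 1" using xb by simp
  have L2: "((\<lambda>F. \<bar>l1_pair \<phi>0 (\<lambda>a. if a \<in> F then \<bar>x a\<bar> else 0)\<bar>) \<longlongrightarrow> g_fun (l1_pair \<phi>0) x)
      (finite_subsets_at_top UNIV)"
    unfolding g_fun_def by (intro tendsto_rabs tend[OF phi0 ab])
  have ev: "eventually (\<lambda>F. \<xi> (xF F) \<le> \<bar>l1_pair \<phi>0 (\<lambda>a. if a \<in> F then \<bar>x a\<bar> else 0)\<bar>)
      (finite_subsets_at_top UNIV)"
  proof (rule eventually_finite_subsets_at_top_weakI)
    fix F :: "'a set" assume fin: "finite F"
    let ?y = "\<lambda>a. if a \<in> F then \<bar>x a\<bar> else 0"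
    have eq: "(\<lambda>a. \<bar>xF F a\<bar>) = ?y" by (auto simp: xF_def)
    have "?y \<in> linf"
      unfolding linf_def bounded_iff using xb by (auto intro!: exI[of _ 1])
    moreover have "fin_supp ?y"
      unfolding fin_supp_def by (rule finite_subset[OF _ fin]) auto
    ultimately have "\<phi> ?y = l1_pair \<phi>0 ?y" using phi1_van decomp by auto
    then have "g_fun \<phi> (xF F) = \<bar>l1_pair \<phi>0 ?y\<bar>" by (simp add: g_fun_def eq)
    then show "\<xi> (xF F) \<le> \<bar>l1_pair \<phi>0 ?y\<bar>" using le xFb by metis
  qed
  show "\<xi> x \<le> g_fun (l1_pair \<phi>0) x"
    by (rule tendsto_le[OF finite_subsets_at_top_neq_bot L2 L1 ev])
qed

end
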